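(* Let $\mathcal{DP}^*_1$ be the digraph with vertex set $\{1,2\}$ and edge set $\{(1,1),(1,2),(2,2)\}$. Then $\Pi_2\text{-}\mathrm{CSP}((\mathcal{DP}^*_1)^\omega) \subseteq \Pi_2\text{-}\mathrm{CSP}(\mathbb{N};\leq)$, where the edge relation and $\leq$ interpret the same binary relation symbol.
   Context: $(\mathcal{DP}^*_1)^\omega$ is the direct power of countably many copies of $\mathcal{DP}^*_1$ (edges holding coordinatewise). $\Pi_2\text{-}\mathrm{CSP}(\mathcal{A})$ is the set of sentences of the form $\forall\bar x\exists\bar y\,P$, with $P$ a conjunction of atoms (relational atoms and equalities), true in $\mathcal{A}$. *)

theory Defs
  imports Main
begin

datatype 'v atom = Rel 'v 'v | Eq 'v 'v

fun sat_atom :: "('a \<Rightarrow> 'a \<Rightarrow> bool) \<Rightarrow> ('v \<Rightarrow> 'a) \<Rightarrow> 'v atom \<Rightarrow> bool" where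
  "sat_atom R s (Rel x y) = R (s x) (s y)"
| "sat_atom R s (Eq x y) = (s x = s y)"

text \<open>Variables are  Inl i  (universally quantified) and  Inr j  (existentially quantified);
  the sentence is the list of conjuncts.\<close>
type_synonym pi2_sentence = "(nat + nat) atom list"

definition pi2_holds :: "'a set \<Rightarrow> ('a \<Rightarrow> 'a \<Rightarrow> bool) \<Rightarrow> pi2_sentence \<Rightarrow> bool" where
  "pi2_holds D R \<phi> \<longleftrightarrow>
     (\<forall>u. (\<forall>i. u i \<in> D) \<longrightarrow>
        (\<exists>e. (\<forall>j. e j \<in> D) \<and> (\<forall>a\<in>set \<phi>. sat_atom R (case_sum u e) a)))"

definition Pi2_CSP :: "'a set \<Rightarrow> ('a \<Rightarrow> 'a \<Rightarrow> bool) \<Rightarrow> pi2_sentence set" where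
  "Pi2_CSP D R = {\<phi>. pi2_holds D R \<phi>}"

definition DP1_dom :: "nat set" where "DP1_dom = {1, 2}"
definition DP1_edge :: "nat \<Rightarrow> nat \<Rightarrow> bool" where
  "DP1_edge a b \<longleftrightarrow> (a, b) \<in> {(1,1), (1,2), (2,2)}"

definition DP1w_dom :: "(nat \<Rightarrow> nat) set" where
  "DP1w_dom = {f. \<forall>i. f i \<in> DP1_dom}"
definition DP1w_edge :: "(nat \<Rightarrow> nat) \<Rightarrow> (nat \<Rightarrow> nat) \<Rightarrow> bool" where
  "DP1w_edge f g \<longleftrightarrow> (\<forall>i. DP1_edge (f i) (g i))"

end

theory Submission
  imports Defs
begin

fun avars :: "'v atom \<Rightarrow> 'v set" where
  "avars (Rel x y) = {x, y}"
| "avars (Eq x y) = {x, y}"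

definition enc :: "nat \<Rightarrow> nat \<Rightarrow> nat" where
  "enc a = (\<lambda>i. if i < a then 2 else 1)"

definition hh :: "nat \<Rightarrow> (nat \<Rightarrow> nat) \<Rightarrow> nat" where
  "hh N g = card {i. i < N \<and> g i = 2}"

lemma enc_dom: "enc a \<in> DP1w_dom"
  by (simp add: enc_def DP1w_dom_def DP1_dom_def)

lemma hh_enc: "a \<le> N \<Longrightarrow> hh N (enc a) = a"
proof -
  assume "a \<le> N"
  hence "{i. i < N \<and> enc a i = 2} = {..<a}" by (auto simp: enc_def)
  thus ?thesis by (simp add: hh_def)
qed

lemma hh_mono: "DP1w_edge f g \<Longrightarrow> hh N f \<le> hh N g"
  unfolding hh_def
  by (rule card_mono) (auto simp: DP1w_edge_def DP1_edge_def, metis n_not_Suc_n numeral_2_eq_2)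

theorem mainTheorem8:
  shows "Pi2_CSP DP1w_dom DP1w_edge \<subseteq> Pi2_CSP (UNIV :: nat set) (\<le>)"
proof
  fix \<phi> assume "\<phi> \<in> Pi2_CSP DP1w_dom DP1w_edge"
  hence H: "pi2_holds DP1w_dom DP1w_edge \<phi>" by (simp add: Pi2_CSP_def)
  show "\<phi> \<in> Pi2_CSP (UNIV :: nat set) (\<le>)"
    unfolding Pi2_CSP_def pi2_holds_def
  proof (intro CollectI allI impI)
    fix u :: "nat \<Rightarrow> nat"
    define V where "V = (\<Union>a\<in>set \<phi>. avars a)"
    have fV: "finite V" unfolding V_def
    proof (rule finite_UN_I)
      show "finite (set \<phi>)" by simp
      fix a :: "(nat+nat) atom" show "finite (avars a)" by (cases a) auto
    qed
    define I where "I = Inl -` V"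
    have fI: "finite I" unfolding I_def by (rule finite_vimageI[OF fV]) (simp add: inj_on_def)
    define N where "N = sum u I"
    have uN: "i \<in> I \<Longrightarrow> u i \<le> N" for i
      unfolding N_def by (rule member_le_sum) (use fI in auto)
    obtain e where e: "\<forall>j. e j \<in> DP1w_dom"
      and sat: "\<forall>a\<in>set \<phi>. sat_atom DP1w_edge (case_sum (enc \<circ> u) e) a"
      using H enc_dom unfolding pi2_holds_def by (metis comp_apply)
    define S where "S = case_sum (enc \<circ> u) e"
    have key: "v \<in> V \<Longrightarrow> hh N (S v) = case_sum u (hh N \<circ> e) v" for v
    proof (cases v)
      case (Inl i)
      assume "v \<in> V"
      hence "i \<in> I" using Inl by (simp add: I_def)
      thus ?thesis using Inl uN hh_enc by (simp add: S_def)
    qed (simp add: S_def)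
    show "\<exists>e. (\<forall>j. e j \<in> UNIV) \<and> (\<forall>a\<in>set \<phi>. sat_atom (\<le>) (case_sum u e) a)"
    proof (intro exI conjI ballI)
      show "\<forall>j. (hh N \<circ> e) j \<in> UNIV" by simp
      fix a assume a: "a \<in> set \<phi>"
      hence av: "avars a \<subseteq> V" by (auto simp: V_def)
      have sa: "sat_atom DP1w_edge S a" using sat a by (simp add: S_def)
      show "sat_atom (\<le>) (case_sum u (hh N \<circ> e)) a"
      proof (cases a)
        case (Rel x y)
        thus ?thesis using av sa key[of x] key[of y] hh_mono[of "S x" "S y" N] by auto
      next
        case (Eq x y)
        thus ?thesis using av sa key[of x] key[of y] by auto
      qed
    qed
  qed
qed

end
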